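(* For every $n\ge 1$, $$\sum_{F\in F_n}q^{\operatorname{inv}(F)}u^{\operatorname{lead}(F)}c^{\operatorname{tree}(F)}=\sum_{P\in PF_n}q^{\operatorname{jump}(P)}u^{\operatorname{lucky}(P)}c^{\operatorname{critic}(P)}.$$
   Context: $F_n$ is the set of rooted forests on the vertex set $\{1,\dots,n\}$ (graphs whose components are trees, each with a distinguished root). A vertex $j$ is a descendant of $i$ if $j\ne i$ and $i$ lies on the path from the root of its component to $j$. An inversion of $F$ is a pair $(i,j)$ with $i>j$ and $j$ a descendant of $i$; $\operatorname{inv}(F)$ is the number of inversions. A vertex $v$ is a leader if it is smaller than all its descendants; $\operatorname{lead}(F)$ is the number of leaders; $\operatorname{tree}(F)$ is the number of trees of $F$. Parking algorithm: for a sequence $P=(p_1,\dots,p_n)$ of positive integers, cars $1,\dots,n$ park in turn, car $c$ taking the first empty space among $p_c,p_c+1,\dots$; let $q_c$ be its space. $PF_n$ is the set of such sequences with all $q_c\le n$. $\operatorname{jump}(P)=\sum_c(q_c-p_c)=\binom{n+1}{2}-\sum_c p_c$; a car is lucky if $q_c=p_c$, and $\operatorname{lucky}(P)$ is the number of lucky cars. A car $c$ is critical if at the moment it parks all spaces $q_c+1,\dots,n$ are occupied; $\operatorname{critic}(P)$ is the number of critical cars. *)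

theory Defs
  imports Main
begin

text \<open>A rooted forest on the vertex set {1..n} is encoded by its parent map:
  par v = None if v is a root, par v = Some w if w is the parent of v
  (the neighbour of v on the path from the root of its component to v).\<close>

definition parent_rel :: "(nat \<Rightarrow> nat option) \<Rightarrow> (nat \<times> nat) set" where
  "parent_rel par = {(v, w). par v = Some w}"

definition descendant :: "(nat \<Rightarrow> nat option) \<Rightarrow> nat \<Rightarrow> nat \<Rightarrow> bool" where
  "descendant par i j \<longleftrightarrow> j \<noteq> i \<and> (j, i) \<in> (parent_rel par)\<^sup>+"

definition rooted_forests :: "nat \<Rightarrow> (nat \<Rightarrow> nat option) set" where
  "rooted_forests n = {par.
      (\<forall>v. v \<notin> {1..n} \<longrightarrow> par v = None)
    \<and> (\<forall>v w. par v = Some w \<longrightarrow> w \<in> {1..n})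
    \<and> (\<forall>v. (v, v) \<notin> (parent_rel par)\<^sup>+)}"

definition inv_forest :: "nat \<Rightarrow> (nat \<Rightarrow> nat option) \<Rightarrow> nat" where
  "inv_forest n par = card {(i, j). i \<in> {1..n} \<and> j \<in> {1..n} \<and> j < i \<and> descendant par i j}"

definition lead_forest :: "nat \<Rightarrow> (nat \<Rightarrow> nat option) \<Rightarrow> nat" where
  "lead_forest n par = card {v \<in> {1..n}. \<forall>j. descendant par v j \<longrightarrow> v < j}"

definition tree_forest :: "nat \<Rightarrow> (nat \<Rightarrow> nat option) \<Rightarrow> nat" where
  "tree_forest n par = card {v \<in> {1..n}. par v = None}"

fun park_spaces :: "nat set \<Rightarrow> nat list \<Rightarrow> nat list" where
  "park_spaces occ [] = []"
| "park_spaces occ (p # ps) =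
     (let s = (LEAST s. p \<le> s \<and> s \<notin> occ) in s # park_spaces (insert s occ) ps)"

definition spaces :: "nat list \<Rightarrow> nat list" where
  "spaces P = park_spaces {} P"

text \<open>Cars are indexed 0..n-1 here (car c+1 of the paper is index c).\<close>
definition parking_functions :: "nat \<Rightarrow> nat list set" where
  "parking_functions n = {P. length P = n \<and> (\<forall>x \<in> set P. 0 < x)
                            \<and> (\<forall>c < n. spaces P ! c \<le> n)}"

definition jump :: "nat list \<Rightarrow> nat" where
  "jump P = (\<Sum>c < length P. spaces P ! c - P ! c)"

definition lucky :: "nat list \<Rightarrow> nat" where
  "lucky P = card {c. c < length P \<and> spaces P ! c = P ! c}"

definition critic :: "nat \<Rightarrow> nat list \<Rightarrow> nat" where
  "critic n P = card {c. c < length P \<and>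
       {spaces P ! c + 1 .. n} \<subseteq> set (take c (spaces P))}"

end

theory Submission
  imports Defs
begin

definition lav :: "nat \<Rightarrow> nat set \<Rightarrow> nat" where
  "lav p A = (LEAST t. p \<le> t \<and> t \<notin> A)"

lemma lav_ex: "finite (A::nat set) \<Longrightarrow> \<exists>t. p \<le> t \<and> t \<notin> A"
proof -
  assume "finite A"
  hence "Max (insert p A) + 1 \<notin> A"
    using Max_ge[of "insert p A"] by fastforce
  moreover have "p \<le> Max (insert p A) + 1"
    using \<open>finite A\<close> by (simp add: le_SucI)
  ultimately show ?thesis by blast
qed

lemma lav_props:
  assumes "finite A"
  shows "p \<le> lav p A" "lav p A \<notin> A"
  using LeastI_ex[OF lav_ex[OF assms, of p]] unfolding lav_def by auto

lemma lav_below: "p \<le> t \<Longrightarrow> t < lav p A \<Longrightarrow> t \<in> A"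
  unfolding lav_def using not_less_Least by blast

lemma lav_le: "p \<le> t \<Longrightarrow> t \<notin> A \<Longrightarrow> lav p A \<le> t"
  unfolding lav_def by (simp add: Least_le)

lemma lav_eqI: "p \<le> x \<Longrightarrow> x \<notin> A \<Longrightarrow> (\<And>t. p \<le> t \<Longrightarrow> t < x \<Longrightarrow> t \<in> A) \<Longrightarrow> lav p A = x"
  unfolding lav_def by (rule Least_equality) (auto simp: not_less[symmetric])

lemma lav_union1:
  assumes "finite A" "\<forall>y\<in>B. lav p A < y"
  shows "lav p (A \<union> B) = lav p A"
  using assms lav_props[OF assms(1), of p] lav_below[of p _ A]
  by (intro lav_eqI) auto

lemma lav_union2:
  assumes "finite A" "finite B" "\<forall>y\<in>B. lav p (A \<union> B) < y"
  shows "lav p A = lav p (A \<union> B)"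
proof -
  have f: "finite (A \<union> B)" using assms by auto
  show ?thesis
  proof (rule lav_eqI)
    show "p \<le> lav p (A \<union> B)" "lav p (A \<union> B) \<notin> A" using lav_props[OF f, of p] by auto
    fix t assume "p \<le> t" "t < lav p (A \<union> B)"
    hence "t \<in> A \<union> B" by (rule lav_below)
    moreover have "t \<notin> B" using assms(3) \<open>t < lav p (A \<union> B)\<close> by force
    ultimately show "t \<in> A" by blast
  qed
qed

lemma lav_union3:
  assumes "\<forall>y\<in>B. y < p"
  shows "lav p (B \<union> A) = lav p A"
proof -
  have "\<And>t. (p \<le> t \<and> t \<notin> B \<union> A) = (p \<le> t \<and> t \<notin> A)" using assms by force
  thus ?thesis unfolding lav_def by simp
qed

function sp :: "(nat \<Rightarrow> nat) \<Rightarrow> nat set \<Rightarrow> nat \<Rightarrow> nat" where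
 "sp f C i = (LEAST t. f i \<le> t \<and> t \<notin> sp f C ` {j\<in>C. j<i})"
  by auto
termination by (relation "measure (\<lambda>(f,C,i). i)") auto

declare sp.simps[simp del]

lemma sp_eq: "sp f C i = lav (f i) (sp f C ` {j\<in>C. j<i})"
  by (subst sp.simps) (simp add: lav_def)

lemma fin_occ: "finite (sp f C ` {j\<in>C. j<i})" by simp

lemma sp_ge: "f i \<le> sp f C i"
  using lav_props(1)[OF fin_occ[of f C i], of "f i"] sp_eq[of f C i] by simp

lemma sp_neq: "j \<in> C \<Longrightarrow> j < i \<Longrightarrow> sp f C i \<noteq> sp f C j"
  using lav_props(2)[OF fin_occ[of f C i], of "f i"] sp_eq[of f C i] by auto

lemma sp_inj: "inj_on (sp f C) C"
  unfolding inj_on_def by (metis linorder_neqE_nat sp_neq)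

lemma sp_cong: "(\<And>j. j \<in> C \<Longrightarrow> j \<le> i \<Longrightarrow> f j = g j) \<Longrightarrow> f i = g i \<Longrightarrow> sp f C i = sp g C i"
proof (induction i rule: less_induct)
  case (less i)
  have "sp f C ` {j\<in>C. j<i} = sp g C ` {j\<in>C. j<i}"
    using less by (intro image_cong) auto
  thus ?case using less sp_eq[of f C i] sp_eq[of g C i] by simp
qed

lemma sp_split:
  assumes z: "\<forall>i\<in>C. i \<le> z" and IJ: "I \<union> J = C - {z}" "I \<inter> J = {}"
    and hI: "\<forall>i\<in>I. sp f I i < s \<or> sp f C i < s" and hJ: "\<forall>j\<in>J. s < f j"
  shows "(i \<in> I \<longrightarrow> sp f C i = sp f I i) \<and> (i \<in> J \<longrightarrow> sp f C i = sp f J i)"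
proof (induction i rule: less_induct)
  case (less i)
  show ?case
  proof (cases "i \<in> I \<union> J")
    case False thus ?thesis by auto
  next
    case True
    have iC: "i \<in> C" "i \<noteq> z" using True IJ by auto
    have "i \<le> z" using z iC by auto
    have occ: "{j\<in>C. j<i} = {j\<in>I. j<i} \<union> {j\<in>J. j<i}"
    proof (intro set_eqI iffI)
      fix j assume "j \<in> {j\<in>C. j<i}"
      hence "j \<in> C - {z}" "j < i" using \<open>i \<le> z\<close> by auto
      thus "j \<in> {j\<in>I. j<i} \<union> {j\<in>J. j<i}" using IJ(1) by blast
    next
      fix j assume "j \<in> {j\<in>I. j<i} \<union> {j\<in>J. j<i}"
      thus "j \<in> {j\<in>C. j<i}" using IJ(1) by blast
    qed
    define AI where "AI = sp f I ` {j\<in>I. j<i}"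
    define AJ where "AJ = sp f J ` {j\<in>J. j<i}"
    have "sp f C ` {j\<in>C. j<i} = sp f C ` {j\<in>I. j<i} \<union> sp f C ` {j\<in>J. j<i}"
      unfolding occ by auto
    also have "sp f C ` {j\<in>I. j<i} = AI" unfolding AI_def
      using less by (intro image_cong) auto
    also have "sp f C ` {j\<in>J. j<i} = AJ" unfolding AJ_def
      using less by (intro image_cong) auto
    finally have occC: "sp f C ` {j\<in>C. j<i} = AI \<union> AJ" .
    have AIlt: "\<forall>y\<in>AI. y < s"
    proof
      fix y assume "y \<in> AI"
      then obtain j where j: "j \<in> I" "j < i" "y = sp f I j" unfolding AI_def by auto
      thus "y < s" using hI less[of j] by auto
    qed
    have AJgt: "\<forall>y\<in>AJ. s < y"
    proof
      fix y assume "y \<in> AJ"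
      then obtain j where j: "j \<in> J" "j < i" "y = sp f J j" unfolding AJ_def by auto
      thus "s < y" using hJ sp_ge[of f j J] by force
    qed
    have finI: "finite AI" "finite AJ" unfolding AI_def AJ_def by auto
    have eC: "sp f C i = lav (f i) (AI \<union> AJ)" using sp_eq[of f C i] occC by simp
    have eI: "sp f I i = lav (f i) AI" using sp_eq[of f I i] AI_def by simp
    have eJ: "sp f J i = lav (f i) AJ" using sp_eq[of f J i] AJ_def by simp
    show ?thesis
    proof (intro conjI impI)
      assume "i \<in> I"
      hence "sp f I i < s \<or> sp f C i < s" using hI by auto
      thus "sp f C i = sp f I i"
      proof
        assume "sp f I i < s"
        thus ?thesis using lav_union1[OF finI(1), of AJ "f i"] eC eI AJgt by force
      next
        assume "sp f C i < s"
        thus ?thesis using lav_union2[OF finI, of "f i"] eC eI AJgt by force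
      qed
    next
      assume "i \<in> J"
      hence "\<forall>y\<in>AI. y < f i" using hJ AIlt by force
      thus "sp f C i = sp f J i" using lav_union3[of AI "f i" AJ] eC eJ by simp
    qed
  qed
qed

definition PFg :: "nat set \<Rightarrow> nat \<Rightarrow> nat \<Rightarrow> (nat \<Rightarrow> nat) set" where
 "PFg C a b = {f. (\<forall>i. i \<notin> C \<longrightarrow> f i = 0) \<and> (\<forall>i\<in>C. a < f i \<and> f i \<le> b \<and> sp f C i \<le> b)}"

lemma PFg_finite: "finite C \<Longrightarrow> finite (PFg C a b)"
proof -
  assume "finite C"
  have "PFg C a b \<subseteq> {f. \<forall>x. (x \<in> C \<longrightarrow> f x \<in> {0..b}) \<and> (x \<notin> C \<longrightarrow> f x = 0)}"
    unfolding PFg_def by auto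
  thus ?thesis using finite_set_of_finite_funs[OF \<open>finite C\<close>, of "{0..b}" 0]
    using finite_subset by blast
qed

lemma PFg_image:
  assumes "finite C" "b = a + card C" "f \<in> PFg C a b"
  shows "sp f C ` C = {a<..b}"
proof (rule card_subset_eq)
  show "finite {a<..b}" by simp
  show "sp f C ` C \<subseteq> {a<..b}"
  proof (rule image_subsetI)
    fix i assume "i \<in> C"
    thus "sp f C i \<in> {a<..b}" using assms(3) sp_ge[of f i C] unfolding PFg_def
      by (simp, meson less_le_trans)
  qed
  show "card (sp f C ` C) = card {a<..b}"
    using card_image[OF sp_inj[of f C]] assms(2) by simp
qed

locale pstep =
  fixes C :: "nat set" and a b :: nat
  assumes finC: "finite C" and neC: "C \<noteq> {}" and cardC: "b = a + card C"
begin

definition "z = Max C"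
definition "C' = C - {z}"

lemma z_in: "z \<in> C" unfolding z_def using finC neC by simp
lemma z_max: "\<forall>i\<in>C. i \<le> z" unfolding z_def using finC by simp
lemma C'_sub: "C' \<subseteq> C" unfolding C'_def by auto
lemma finC': "finite C'" using finC C'_sub finite_subset by blast
lemma z_notin: "z \<notin> C'" unfolding C'_def by auto
lemma card_C': "card C' = card C - 1" unfolding C'_def using z_in finC by simp
lemma lt_z: "i \<in> C' \<Longrightarrow> i < z" using z_max unfolding C'_def by force
lemma below_z: "{j\<in>C. j < z} = C'" unfolding C'_def using z_max by force

definition Dom where
 "Dom = (SIGMA s:{a<..b}. SIGMA I:{I. I \<subseteq> C' \<and> card I = s - Suc a}.
            PFg I a (s - 1) \<times> PFg (C' - I) s b \<times> {a<..s})"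

definition glue :: "nat \<times> nat set \<times> (nat\<Rightarrow>nat) \<times> (nat\<Rightarrow>nat) \<times> nat \<Rightarrow> nat \<Rightarrow> nat" where
 "glue t = (case t of (s,I,g,h,x) \<Rightarrow>
     (\<lambda>i. if i \<in> I then g i else if i = z then x else if i \<in> C then h i else 0))"

definition dec :: "(nat \<Rightarrow> nat) \<Rightarrow> nat \<times> nat set \<times> (nat\<Rightarrow>nat) \<times> (nat\<Rightarrow>nat) \<times> nat" where
 "dec f = (let s = sp f C z; I = {i\<in>C'. f i < s} in
     (s, I, \<lambda>i. if i \<in> I then f i else 0, \<lambda>i. if i \<in> C' - I then f i else 0, f z))"

lemma glue_facts:
  assumes t: "(s,I,g,h,x) \<in> Dom"
  defines "f \<equiv> glue (s,I,g,h,x)" and "J \<equiv> C' - I"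
  shows "\<forall>i\<in>I. sp f C i = sp g I i" "\<forall>i\<in>J. sp f C i = sp h J i" "sp f C z = s"
    "f \<in> PFg C a b" "sp g I ` I = {a<..s-1}" "sp h J ` J = {s<..b}"
    "\<forall>i\<in>I. f i = g i" "\<forall>i\<in>J. f i = h i" "f z = x"
    "\<forall>i\<in>I. g i < s \<and> sp g I i < s" "\<forall>i\<in>J. s < h i"
    "I \<subseteq> C'" "s \<in> {a<..b}" "x \<in> {a<..s}" "g \<in> PFg I a (s-1)" "h \<in> PFg J s b"
    "card I = s - Suc a"
proof -
  have s: "s \<in> {a<..b}" and I: "I \<subseteq> C'" "card I = s - Suc a"
    and g: "g \<in> PFg I a (s - 1)" and h: "h \<in> PFg J s b" and x: "x \<in> {a<..s}"
    using t unfolding Dom_def J_def by auto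
  show "I \<subseteq> C'" "s \<in> {a<..b}" "x \<in> {a<..s}" "g \<in> PFg I a (s-1)" "h \<in> PFg J s b"
    "card I = s - Suc a" using s I g h x by auto
  have finI: "finite I" using I finC' finite_subset by blast
  have finJ: "finite J" unfolding J_def using finC' by simp
  have zI: "z \<notin> I" using I z_notin by auto
  have zJ: "z \<notin> J" unfolding J_def using z_notin by auto
  have IJ: "I \<inter> J = {}" "I \<union> J = C - {z}" unfolding J_def using I C'_def by auto
  have fI: "\<forall>i\<in>I. f i = g i" unfolding f_def glue_def by simp
  have fJ: "\<forall>i\<in>J. f i = h i" unfolding f_def glue_def J_def C'_def by auto
  have fz: "f z = x" unfolding f_def glue_def using zI by simp
  show "\<forall>i\<in>I. f i = g i" "\<forall>i\<in>J. f i = h i" "f z = x" using fI fJ fz by auto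
  have cJ: "card J = b - s"
  proof -
    have "card J = card C' - card I" unfolding J_def using I finC' by (simp add: card_Diff_subset finite_subset)
    thus ?thesis using card_C' I cardC s neC finC by (simp add: card_gt_0_iff)
  qed
  have imI: "sp g I ` I = {a<..s-1}"
    using PFg_image[OF finI _ g] I s by simp
  have imJ: "sp h J ` J = {s<..b}"
    using PFg_image[OF finJ _ h] cJ s by simp
  show "sp g I ` I = {a<..s-1}" "sp h J ` J = {s<..b}" using imI imJ by auto
  have gI: "\<forall>i\<in>I. g i < s \<and> sp g I i < s"
    using g s unfolding PFg_def by force
  have hJ: "\<forall>i\<in>J. s < h i" using h unfolding PFg_def by auto
  show "\<forall>i\<in>I. g i < s \<and> sp g I i < s" "\<forall>i\<in>J. s < h i" using gI hJ by auto
  have spI: "\<forall>i\<in>I. sp f I i = sp g I i"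
    using fI by (auto intro!: sp_cong)
  have spJ: "\<forall>i\<in>J. sp f J i = sp h J i"
    using fJ by (auto intro!: sp_cong)
  have split: "\<And>i. (i \<in> I \<longrightarrow> sp f C i = sp f I i) \<and> (i \<in> J \<longrightarrow> sp f C i = sp f J i)"
    apply (rule sp_split[OF z_max IJ(2) IJ(1), of f s])
    using spI gI fJ hJ by auto
  show A: "\<forall>i\<in>I. sp f C i = sp g I i" using split spI by auto
  show B: "\<forall>i\<in>J. sp f C i = sp h J i" using split spJ by auto
  have "sp f C ` C' = sp f C ` I \<union> sp f C ` J" using IJ C'_def by auto
  also have "\<dots> = sp g I ` I \<union> sp h J ` J" using A B by auto
  finally have occ: "sp f C ` {j\<in>C. j < z} = {a<..s-1} \<union> {s<..b}"
    using below_z imI imJ by simp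
  show sz: "sp f C z = s"
    unfolding sp_eq[of f C z] occ fz
  proof (rule lav_eqI)
    show "x \<le> s" using x by simp
    show "s \<notin> {a<..s - 1} \<union> {s<..b}" by auto
    fix t assume "x \<le> t" "t < s" thus "t \<in> {a<..s - 1} \<union> {s<..b}" using x by auto
  qed
  have P1: "\<forall>i. i \<notin> C \<longrightarrow> f i = 0" unfolding f_def glue_def using I C'_def z_in by auto
  have P2: "\<forall>i\<in>C. a < f i \<and> f i \<le> b \<and> sp f C i \<le> b"
  proof
    fix i assume iC: "i \<in> C"
    consider "i \<in> I" | "i \<in> J" | "i = z" using iC IJ by auto
    thus "a < f i \<and> f i \<le> b \<and> sp f C i \<le> b"
    proof cases
      case 1 thus ?thesis using fI A g s unfolding PFg_def by force
    next
      case 2 thus ?thesis using fJ B h s unfolding PFg_def by force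
    next
      case 3 thus ?thesis using fz sz x s by auto
    qed
  qed
  show "f \<in> PFg C a b" unfolding PFg_def using P1 P2 by blast
qed

end

context pstep begin

lemma dec_glue: "t \<in> Dom \<Longrightarrow> dec (glue t) = t"
proof -
  assume t: "t \<in> Dom"
  obtain s I g h x where tt: "t = (s,I,g,h,x)" by (cases t) auto
  note F = glue_facts[OF t[unfolded tt]]
  define f where "f = glue (s,I,g,h,x)"
  note F = F[folded f_def]
  have I: "{i\<in>C'. f i < s} = I"
  proof (intro set_eqI iffI)
    fix i assume "i \<in> {i\<in>C'. f i < s}"
    thus "i \<in> I" using F(8,11) by force
  next
    fix i assume "i \<in> I" thus "i \<in> {i\<in>C'. f i < s}" using F(7,10,12) by auto
  qed
  have g: "(\<lambda>i. if i \<in> I then f i else 0) = g"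
    using F(7,15) unfolding PFg_def by auto
  have h: "(\<lambda>i. if i \<in> C' - I then f i else 0) = h"
    using F(8,16) unfolding PFg_def by auto
  show ?thesis unfolding tt f_def[symmetric] dec_def Let_def F(3) I g h F(9) by simp
qed

lemma dec_facts:
  assumes f: "f \<in> PFg C a b"
  shows "dec f \<in> Dom" "glue (dec f) = f"
proof -
  define s where "s = sp f C z"
  define I where "I = {i\<in>C'. f i < s}"
  define J where "J = C' - I"
  define g where "g = (\<lambda>i. if i \<in> I then f i else 0)"
  define h where "h = (\<lambda>i. if i \<in> J then f i else 0)"
  have d: "dec f = (s, I, g, h, f z)" unfolding dec_def s_def I_def g_def h_def J_def Let_def by simp
  have f0: "\<forall>i. i \<notin> C \<longrightarrow> f i = 0" and fC: "\<forall>i\<in>C. a < f i \<and> f i \<le> b \<and> sp f C i \<le> b"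
    using f unfolding PFg_def by auto
  have imC: "sp f C ` C = {a<..b}" using PFg_image[OF finC cardC f] .
  have s: "s \<in> {a<..b}" unfolding s_def using imC z_in by blast
  have neq: "\<forall>i\<in>C'. sp f C i \<noteq> s" unfolding s_def
    using sp_inj[of f C] z_in C'_sub z_notin by (metis inj_on_contraD subsetD)
  have socc: "\<And>i. i \<in> C' \<Longrightarrow> s \<notin> sp f C ` {j\<in>C. j<i}"
  proof
    fix i assume i: "i \<in> C'" and "s \<in> sp f C ` {j\<in>C. j<i}"
    then obtain j where j: "j \<in> C" "j < i" "s = sp f C j" by auto
    have "j \<in> C'" using j lt_z[OF i] unfolding C'_def by auto
    thus False using neq j by auto
  qed
  have IJ: "I \<inter> J = {}" "I \<union> J = C - {z}" unfolding J_def I_def C'_def by auto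
  have hJ: "\<forall>j\<in>J. s < f j"
  proof
    fix j assume j: "j \<in> J"
    hence jC: "j \<in> C'" "s \<le> f j" unfolding J_def I_def by auto
    show "s < f j"
    proof (rule ccontr)
      assume "\<not> s < f j" hence "f j = s" using jC by simp
      hence "sp f C j = s" using sp_eq[of f C j] lav_eqI[of s s] socc[OF jC(1)] by auto
      thus False using neq jC by auto
    qed
  qed
  have spI: "\<forall>i\<in>I. sp f C i < s"
  proof
    fix i assume i: "i \<in> I"
    hence iC: "i \<in> C'" "f i < s" unfolding I_def by auto
    have "sp f C i \<le> s" using sp_eq[of f C i] lav_le[of "f i" s] socc[OF iC(1)] iC by auto
    thus "sp f C i < s" using neq iC by force
  qed
  have split: "\<And>i. (i \<in> I \<longrightarrow> sp f C i = sp f I i) \<and> (i \<in> J \<longrightarrow> sp f C i = sp f J i)"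
    by (rule sp_split[OF z_max IJ(2) IJ(1), of f s]) (use spI hJ in auto)
  have gI: "\<forall>i\<in>I. sp g I i = sp f C i" using split by (auto simp: g_def intro!: sp_cong)
  have hJ': "\<forall>i\<in>J. sp h J i = sp f C i" using split by (auto simp: h_def intro!: sp_cong)
  have imI: "sp f C ` I = {a<..<s}"
  proof (intro set_eqI iffI)
    fix t assume "t \<in> sp f C ` I"
    then obtain i where i: "i \<in> I" "t = sp f C i" by auto
    thus "t \<in> {a<..<s}" using spI fC sp_ge[of f i C] I_def C'_def
      by (simp, meson less_le_trans Diff_subset subsetD mem_Collect_eq)
  next
    fix t assume t: "t \<in> {a<..<s}"
    hence "t \<in> sp f C ` C" using imC s by auto
    then obtain k where k: "k \<in> C" "t = sp f C k" by auto
    have "k \<noteq> z" using k t s_def by auto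
    moreover have "k \<notin> J" using hJ sp_ge[of f k C] k t by force
    ultimately have "k \<in> I" using k IJ by auto
    thus "t \<in> sp f C ` I" using k by auto
  qed
  have cardI: "card I = s - Suc a"
  proof -
    have "card I = card (sp f C ` I)"
      using card_image[OF inj_on_subset[OF sp_inj[of f C]], of I] IJ by (metis Diff_subset Un_upper1 subset_trans)
    thus ?thesis using imI by simp
  qed
  have g: "g \<in> PFg I a (s - 1)"
  proof -
    have "\<forall>i\<in>I. a < g i \<and> g i \<le> s - 1 \<and> sp g I i \<le> s - 1"
    proof
      fix i assume i: "i \<in> I"
      hence "g i = f i" "f i < s" "i \<in> C" unfolding g_def I_def C'_def by auto
      moreover have "sp g I i < s" using gI spI i by auto
      ultimately show "a < g i \<and> g i \<le> s - 1 \<and> sp g I i \<le> s - 1" using fC by auto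
    qed
    moreover have "\<forall>i. i \<notin> I \<longrightarrow> g i = 0" unfolding g_def by auto
    ultimately show ?thesis unfolding PFg_def by blast
  qed
  have h: "h \<in> PFg J s b"
  proof -
    have "\<forall>i\<in>J. s < h i \<and> h i \<le> b \<and> sp h J i \<le> b"
    proof
      fix i assume i: "i \<in> J"
      hence "h i = f i" "s < f i" "i \<in> C" using hJ unfolding h_def J_def C'_def by auto
      moreover have "sp h J i = sp f C i" using hJ' i by auto
      ultimately show "s < h i \<and> h i \<le> b \<and> sp h J i \<le> b" using fC by auto
    qed
    moreover have "\<forall>i. i \<notin> J \<longrightarrow> h i = 0" unfolding h_def by auto
    ultimately show ?thesis unfolding PFg_def by blast
  qed
  have x: "f z \<in> {a<..s}" using fC z_in sp_ge[of f z C] s_def by auto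
  have Isub: "I \<subseteq> C'" unfolding I_def by auto
  show "dec f \<in> Dom" unfolding d Dom_def using s Isub cardI g h x J_def by auto
  show "glue (dec f) = f"
  proof
    fix i show "glue (dec f) i = f i"
      unfolding d glue_def g_def h_def using f0 IJ J_def C'_def by auto
  qed
qed

lemma bij: "bij_betw glue Dom (PFg C a b)"
  by (rule bij_betw_byWitness[where f'=dec])
     (auto simp: dec_glue dec_facts intro: glue_facts(4))

end

definition jumpg :: "nat set \<Rightarrow> (nat \<Rightarrow> nat) \<Rightarrow> nat" where
  "jumpg C f = (\<Sum>i\<in>C. sp f C i - f i)"
definition luckyg :: "nat set \<Rightarrow> (nat \<Rightarrow> nat) \<Rightarrow> nat" where
  "luckyg C f = card {i\<in>C. sp f C i = f i}"
definition criticg :: "nat \<Rightarrow> nat set \<Rightarrow> (nat \<Rightarrow> nat) \<Rightarrow> nat" where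
  "criticg b C f = card {i\<in>C. {sp f C i + 1..b} \<subseteq> sp f C ` {j\<in>C. j<i}}"
definition wP :: "'a::comm_semiring_1 \<Rightarrow> 'a \<Rightarrow> 'a \<Rightarrow> nat \<Rightarrow> nat set \<Rightarrow> (nat \<Rightarrow> nat) \<Rightarrow> 'a" where
  "wP q u c b C f = q ^ jumpg C f * u ^ luckyg C f * c ^ criticg b C f"
definition Q :: "'a::comm_semiring_1 \<Rightarrow> 'a \<Rightarrow> 'a \<Rightarrow> nat set \<Rightarrow> nat \<Rightarrow> nat \<Rightarrow> 'a" where
  "Q q u c C a b = (\<Sum>f\<in>PFg C a b. wP q u c b C f)"

lemma card_filter_sum: "finite A \<Longrightarrow> card {x\<in>A. P x} = (\<Sum>x\<in>A. if P x then 1 else 0)"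
  by (simp add: sum.If_cases Int_def conj_commute)

context pstep begin

lemma sum_split3:
  assumes "I \<subseteq> C'"
  shows "(\<Sum>i\<in>C. F i) = (\<Sum>i\<in>I. F i) + (\<Sum>i\<in>C'-I. F i) + F (z::nat)"
proof -
  have finI: "finite I" using assms finC' finite_subset by blast
  have "C = insert z (I \<union> (C' - I))" using assms z_in C'_def by auto
  moreover have "z \<notin> I \<union> (C' - I)" using assms z_notin by auto
  ultimately have "(\<Sum>i\<in>C. F i) = F z + (\<Sum>i\<in>I \<union> (C'-I). F i)"
    using finC' finI by (metis finite_Diff finite_UnI sum.insert)
  also have "(\<Sum>i\<in>I \<union> (C'-I). F i) = (\<Sum>i\<in>I. F i) + (\<Sum>i\<in>C'-I. F i)"
    using finI finC' by (intro sum.union_disjoint) auto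
  finally show ?thesis by (simp add: add_ac)
qed

lemma stats:
  assumes t: "(s,I,g,h,x) \<in> Dom"
  defines "f \<equiv> glue (s,I,g,h,x)" and "J \<equiv> C' - I"
  shows "jumpg C f = jumpg I g + jumpg J h + (s - x)"
    "luckyg C f = luckyg I g + luckyg J h + (if x = s then 1 else 0)"
    "criticg b C f = criticg b J h + 1"
proof -
  note F = glue_facts[OF t, folded f_def J_def]
  have finI: "finite I" using F(12) finC' finite_subset by blast
  have finJ: "finite J" unfolding J_def using finC' by simp
  show "jumpg C f = jumpg I g + jumpg J h + (s - x)"
    unfolding jumpg_def sum_split3[OF F(12)] J_def[symmetric] using F(1,2,3,7,8,9) by simp
  show "luckyg C f = luckyg I g + luckyg J h + (if x = s then 1 else 0)"
    unfolding luckyg_def card_filter_sum[OF finC] card_filter_sum[OF finI] card_filter_sum[OF finJ]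
      sum_split3[OF F(12)] J_def[symmetric] using F(1,2,3,7,8,9) by simp
  have IJ: "I \<inter> J = {}" "I \<union> J = C'" unfolding J_def using F(12) by auto
  have occ: "\<And>i. i \<in> C' \<Longrightarrow> sp f C ` {j\<in>C. j<i} = sp g I ` {j\<in>I. j<i} \<union> sp h J ` {j\<in>J. j<i}"
  proof -
    fix i assume i: "i \<in> C'"
    have "{j\<in>C. j<i} = {j\<in>I. j<i} \<union> {j\<in>J. j<i}"
      using IJ lt_z[OF i] C'_def by force
    hence "sp f C ` {j\<in>C. j<i} = sp f C ` {j\<in>I. j<i} \<union> sp f C ` {j\<in>J. j<i}" by auto
    also have "\<dots> = sp g I ` {j\<in>I. j<i} \<union> sp h J ` {j\<in>J. j<i}"
      using F(1,2) by (intro arg_cong2[where f="(\<union>)"] image_cong) auto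
    finally show "sp f C ` {j\<in>C. j<i} = sp g I ` {j\<in>I. j<i} \<union> sp h J ` {j\<in>J. j<i}" .
  qed
  have cI: "\<And>i. i \<in> I \<Longrightarrow> \<not> {sp f C i + 1..b} \<subseteq> sp f C ` {j\<in>C. j<i}"
  proof
    fix i assume i: "i \<in> I" and sub: "{sp f C i + 1..b} \<subseteq> sp f C ` {j\<in>C. j<i}"
    have "sp f C i < s" using F(1,10) i by auto
    hence "s \<in> {sp f C i + 1..b}" using F(13) by auto
    with sub obtain j where j: "j \<in> C" "j < i" "s = sp f C j" by auto
    have "j \<noteq> z" using j lt_z[of i] i F(12) by auto
    hence "sp f C j \<noteq> sp f C z" using sp_inj[of f C] j z_in by (meson inj_on_contraD)
    thus False using j F(3) by simp
  qed
  have cJ: "\<And>i. i \<in> J \<Longrightarrow> ({sp f C i + 1..b} \<subseteq> sp f C ` {j\<in>C. j<i}) =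
                    ({sp h J i + 1..b} \<subseteq> sp h J ` {j\<in>J. j<i})"
  proof -
    fix i assume i: "i \<in> J"
    hence iC: "i \<in> C'" unfolding J_def by auto
    have e: "sp f C i = sp h J i" using F(2) i by auto
    have gt: "s < sp h J i" using F(11) i sp_ge[of h i J] by force
    have lt: "\<forall>y\<in>sp g I ` {j\<in>I. j<i}. y < s" using F(10) by auto
    show "?thesis i" unfolding occ[OF iC] e using gt lt by fastforce
  qed
  have cz: "{sp f C z + 1..b} \<subseteq> sp f C ` {j\<in>C. j<z}"
  proof -
    have "{s + 1..b} = sp h J ` J" using F(6) by auto
    also have "\<dots> = sp f C ` J" using F(2) by auto
    also have "\<dots> \<subseteq> sp f C ` C'" using IJ by auto
    finally show ?thesis unfolding below_z F(3) .
  qed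
  show "criticg b C f = criticg b J h + 1"
    unfolding criticg_def card_filter_sum[OF finC] card_filter_sum[OF finJ]
      sum_split3[OF F(12)] J_def[symmetric] using cI cJ cz by simp
qed

lemma weight:
  assumes t: "(s,I,g,h,x) \<in> Dom"
  shows "wP q u c b C (glue (s,I,g,h,x)) =
     wP q u 1 (s-1) I g * wP q u c b (C' - I) h * (c * q^(s-x) * u^(if x = s then 1 else 0))"
  unfolding wP_def stats[OF t] by (simp add: power_add mult_ac)

end

context pstep begin

lemma Q_rec:
  "Q q u c C a b = c * (\<Sum>s\<in>{a<..b}. \<Sum>I\<in>{I. I \<subseteq> C' \<and> card I = s - Suc a}.
       Q q u 1 I a (s-1) * Q q u c (C' - I) s b * (\<Sum>x\<in>{a<..s}. q^(s-x) * u^(if x = s then 1 else 0)))"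
proof -
  define Is where "Is s = {I. I \<subseteq> C' \<and> card I = s - Suc a}" for s
  define T where "T s I = PFg I a (s - 1) \<times> PFg (C' - I) s b \<times> {a<..s}" for s I
  define G where "G t = wP q u c b C (glue t)" for t
  have finIs: "finite (Is s)" for s
    by (rule finite_subset[of _ "Pow C'"]) (auto simp: Is_def finC')
  have finT: "I \<in> Is s \<Longrightarrow> finite (T s I)" for s I
  proof -
    assume "I \<in> Is s"
    hence "finite I" "finite (C' - I)" unfolding Is_def using finC' finite_subset by auto
    thus "finite (T s I)" unfolding T_def by (simp add: PFg_finite)
  qed
  have "Q q u c C a b = (\<Sum>t\<in>Dom. G t)"
    unfolding Q_def G_def using sum.reindex_bij_betw[OF bij, of "wP q u c b C"] by simp
  also have "\<dots> = (\<Sum>s\<in>{a<..b}. \<Sum>p\<in>(SIGMA I:Is s. T s I). G (s,p))"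
    unfolding Dom_def Is_def[symmetric] T_def[symmetric]
    by (subst sum.Sigma) (auto simp: finIs finT)
  also have "\<dots> = (\<Sum>s\<in>{a<..b}. \<Sum>I\<in>Is s. \<Sum>r\<in>T s I. G (s,I,r))"
    by (rule sum.cong[OF refl], subst sum.Sigma) (auto simp: finIs finT)
  also have "\<dots> = (\<Sum>s\<in>{a<..b}. \<Sum>I\<in>Is s. c * (Q q u 1 I a (s-1) * Q q u c (C' - I) s b *
        (\<Sum>x\<in>{a<..s}. q^(s-x) * u^(if x = s then 1 else 0))))"
  proof (intro sum.cong refl)
    fix s I assume sI: "s \<in> {a<..b}" "I \<in> Is s"
    have "(\<Sum>r\<in>T s I. G (s,I,r)) = (\<Sum>g\<in>PFg I a (s-1). \<Sum>h\<in>PFg (C'-I) s b. \<Sum>x\<in>{a<..s}. G (s,I,g,h,x))"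
      unfolding T_def sum.cartesian_product' by (rule refl)
    also have "\<dots> = (\<Sum>g\<in>PFg I a (s-1). \<Sum>h\<in>PFg (C'-I) s b. \<Sum>x\<in>{a<..s}.
        wP q u 1 (s-1) I g * wP q u c b (C' - I) h * (c * q^(s-x) * u^(if x = s then 1 else 0)))"
    proof (intro sum.cong refl)
      fix g h x assume "g \<in> PFg I a (s-1)" "h \<in> PFg (C'-I) s b" "x \<in> {a<..s}"
      hence "(s,I,g,h,x) \<in> Dom" unfolding Dom_def using sI Is_def by auto
      thus "G (s,I,g,h,x) = wP q u 1 (s-1) I g * wP q u c b (C' - I) h * (c * q^(s-x) * u^(if x = s then 1 else 0))"
        unfolding G_def by (rule weight)
    qed
    also have "\<dots> = c * (Q q u 1 I a (s-1) * Q q u c (C' - I) s b *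
        (\<Sum>x\<in>{a<..s}. q^(s-x) * u^(if x = s then 1 else 0)))"
      unfolding Q_def by (simp add: sum_distrib_left sum_distrib_right mult_ac, rule sum.swap)
    finally show "(\<Sum>r\<in>T s I. G (s,I,r)) = c * (Q q u 1 I a (s-1) * Q q u c (C' - I) s b *
        (\<Sum>x\<in>{a<..s}. q^(s-x) * u^(if x = s then 1 else 0)))" .
  qed
  finally show ?thesis unfolding Is_def by (simp add: sum_distrib_left)
qed

end

fun X :: "'a::comm_semiring_1 \<Rightarrow> 'a \<Rightarrow> nat \<Rightarrow> 'a \<Rightarrow> 'a" where
  "X q u 0 c = 1"
| "X q u (Suc n) c = c * (\<Sum>k\<le>n. of_nat (n choose k) * (\<Sum>j\<le>k. q^j * u^(if j=0 then 1 else 0)) * X q u k 1 * X q u (n-k) c)"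

declare X.simps(2)[simp del]

lemma xsum_reindex:
  "(\<Sum>x\<in>{a<..k + Suc a}. q^(k + Suc a - x) * u^(if x = k + Suc a then 1 else 0))
   = (\<Sum>j\<le>k. (q::'a::comm_semiring_1)^j * u^(if j=0 then 1 else 0))"
proof -
  have "{a<..k + Suc a} = (\<lambda>j. k + Suc a - j) ` {..k}"
  proof (intro set_eqI iffI)
    fix x assume "x \<in> {a<..k + Suc a}"
    hence "x = k + Suc a - (k + Suc a - x)" "k + Suc a - x \<in> {..k}" by auto
    thus "x \<in> (\<lambda>j. k + Suc a - j) ` {..k}" by blast
  qed auto
  moreover have "inj_on (\<lambda>j. k + Suc a - j) {..k}" by (auto simp: inj_on_def)
  ultimately show ?thesis by (auto simp: sum.reindex intro!: sum.cong)
qed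

lemma ssum_reindex:
  "(\<Sum>s\<in>{a<..a + Suc n}. F s) = (\<Sum>k\<le>n. F (k + Suc a))"
proof -
  have "{a<..a + Suc n} = (\<lambda>k. k + Suc a) ` {..n}"
  proof (intro set_eqI iffI)
    fix x assume "x \<in> {a<..a + Suc n}"
    hence "x = (x - Suc a) + Suc a" "x - Suc a \<in> {..n}" by auto
    thus "x \<in> (\<lambda>k. k + Suc a) ` {..n}" by blast
  qed auto
  moreover have "inj_on (\<lambda>k. k + Suc a) {..n}" by (auto simp: inj_on_def)
  ultimately show ?thesis by (simp add: sum.reindex)
qed

lemma PFg_empty: "PFg {} a b = {\<lambda>_. 0}"
  unfolding PFg_def by auto

lemma Q_X: "finite C \<Longrightarrow> b = a + card C \<Longrightarrow> Q q u c C a b = X q u (card C) c"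
proof (induction "card C" arbitrary: C a b c rule: less_induct)
  case less
  show ?case
  proof (cases "card C")
    case 0
    hence "C = {}" using less by simp
    thus ?thesis by (simp add: Q_def PFg_empty wP_def jumpg_def luckyg_def criticg_def)
  next
    case (Suc n)
    hence ne: "C \<noteq> {}" by auto
    interpret pstep C a b using less ne by unfold_locales auto
    have IH1: "Q q u 1 I a (s-1) = X q u (s - Suc a) 1"
      if "s \<in> {a<..b}" "I \<subseteq> C'" "card I = s - Suc a" for s I
    proof -
      have fI: "finite I" using that(2) finC' finite_subset by blast
      have "card I \<le> card C'" using card_mono[OF finC' that(2)] .
      hence lt: "card I < card C" using card_C' Suc by linarith
      have e: "s - 1 = a + card I" using that(1,3) by auto
      have "Q q u 1 I a (s-1) = X q u (card I) 1" by (rule less(1)[OF lt fI e])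
      thus ?thesis using that(3) by simp
    qed
    have IH2: "Q q u c (C' - I) s b = X q u (n - (s - Suc a)) c"
      if "s \<in> {a<..b}" "I \<subseteq> C'" "card I = s - Suc a" for s I
    proof -
      have fI: "finite I" using that(2) finC' finite_subset by blast
      have fJ: "finite (C' - I)" using finC' by blast
      have "card (C' - I) = card C' - card I" by (rule card_Diff_subset[OF fI that(2)])
      hence cd: "card (C' - I) = n - (s - Suc a)" using that(3) card_C' Suc by simp
      hence lt: "card (C' - I) < card C" using Suc by linarith
      have e: "b = s + card (C' - I)" using cd that(1) cardC Suc by auto
      have "Q q u c (C' - I) s b = X q u (card (C' - I)) c" by (rule less(1)[OF lt fJ e])
      thus ?thesis using cd by simp
    qed
    have "Q q u c C a b = c * (\<Sum>s\<in>{a<..b}. \<Sum>I\<in>{I. I \<subseteq> C' \<and> card I = s - Suc a}.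
       X q u (s - Suc a) 1 * X q u (n - (s - Suc a)) c * (\<Sum>x\<in>{a<..s}. q^(s-x) * u^(if x = s then 1 else 0)))"
      unfolding Q_rec using IH1 IH2 by (intro arg_cong[where f="(*) c"] sum.cong refl) auto
    also have "\<dots> = c * (\<Sum>s\<in>{a<..b}. of_nat (n choose (s - Suc a)) *
       (X q u (s - Suc a) 1 * X q u (n - (s - Suc a)) c * (\<Sum>x\<in>{a<..s}. q^(s-x) * u^(if x = s then 1 else 0))))"
      by (intro arg_cong[where f="(*) c"] sum.cong refl) (simp add: n_subsets[OF finC'] card_C' Suc)
    also have "\<dots> = c * (\<Sum>k\<le>n. of_nat (n choose k) *
       (X q u k 1 * X q u (n - k) c * (\<Sum>j\<le>k. q^j * u^(if j=0 then 1 else 0))))"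
    proof -
      have b: "b = a + Suc n" using cardC Suc by simp
      show ?thesis unfolding b ssum_reindex
        by (intro arg_cong[where f="(*) c"] sum.cong refl) (simp only: xsum_reindex, simp)
    qed
    also have "\<dots> = X q u (card C) c"
      unfolding Suc X.simps(2) by (simp add: mult_ac)
    finally show ?thesis .
  qed
qed

lemma park_len: "length (park_spaces occ P) = length P"
  by (induction P arbitrary: occ) (auto simp: Let_def)

lemma park_nth: "c < length P \<Longrightarrow>
  park_spaces occ P ! c = lav (P!c) (occ \<union> set (take c (park_spaces occ P)))"
proof (induction P arbitrary: occ c)
  case Nil thus ?case by simp
next
  case (Cons p ps)
  show ?case
  proof (cases c)
    case 0 thus ?thesis by (simp add: Let_def lav_def)
  next
    case (Suc c')
    thus ?thesis using Cons by (simp add: Let_def)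
  qed
qed

definition phi :: "nat list \<Rightarrow> nat \<Rightarrow> nat" where
  "phi P = (\<lambda>i. if i < length P then P!i else 0)"

lemma set_take_nth: "c \<le> length S \<Longrightarrow> set (take c S) = (\<lambda>j. S!j) ` {j. j < c}"
proof -
  assume c: "c \<le> length S"
  have "set (take c S) = {take c S ! i |i. i < length (take c S)}" by (rule set_conv_nth)
  also have "\<dots> = (\<lambda>j. S!j) ` {j. j < c}" using c by (auto, metis nth_take)
  finally show ?thesis .
qed

lemma spaces_sp: "c < length P \<Longrightarrow> spaces P ! c = sp (phi P) {0..<length P} c"
proof (induction c rule: less_induct)
  case (less c)
  have len: "length (spaces P) = length P" unfolding spaces_def by (simp add: park_len)
  have "spaces P ! c = lav (P!c) (set (take c (spaces P)))"
    unfolding spaces_def using park_nth[OF less(2), of "{}"] by simp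
  also have "set (take c (spaces P)) = (\<lambda>j. spaces P ! j) ` {j. j < c}"
    using less(2) len by (intro set_take_nth) simp
  also have "\<dots> = sp (phi P) {0..<length P} ` {j\<in>{0..<length P}. j < c}"
    using less by (auto intro!: image_cong)
  finally show ?case using sp_eq[of "phi P" "{0..<length P}" c] less(2) by (simp add: phi_def)
qed

lemma set_take_sp: "c < length P \<Longrightarrow> set (take c (spaces P)) = sp (phi P) {0..<length P} ` {j\<in>{0..<length P}. j < c}"
proof -
  assume c: "c < length P"
  have len: "length (spaces P) = length P" unfolding spaces_def by (simp add: park_len)
  have "set (take c (spaces P)) = (\<lambda>j. spaces P ! j) ` {j. j < c}"
    using c len by (intro set_take_nth) simp
  also have "\<dots> = sp (phi P) {0..<length P} ` {j\<in>{0..<length P}. j < c}"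
    using c spaces_sp by (auto intro!: image_cong)
  finally show ?thesis .
qed

lemma phi_map: "(\<forall>i. i \<notin> {0..<n} \<longrightarrow> f i = 0) \<Longrightarrow> phi (map f [0..<n]) = f"
  unfolding phi_def by auto

lemma pf_bij: "bij_betw phi (parking_functions n) (PFg {0..<n} 0 n)"
proof (rule bij_betw_byWitness[where f'="\<lambda>f. map f [0..<n]"])
  show "\<forall>P\<in>parking_functions n. map (phi P) [0..<n] = P"
    unfolding parking_functions_def phi_def by (auto intro: nth_equalityI)
  show "\<forall>f\<in>PFg {0..<n} 0 n. phi (map f [0..<n]) = f"
    unfolding PFg_def using phi_map by blast
  show "phi ` parking_functions n \<subseteq> PFg {0..<n} 0 n"
  proof
    fix f assume "f \<in> phi ` parking_functions n"
    then obtain P where P: "P \<in> parking_functions n" "f = phi P" by auto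
    have len: "length P = n" and pos: "\<forall>x\<in>set P. 0 < x" and le: "\<forall>c<n. spaces P ! c \<le> n"
      using P unfolding parking_functions_def by auto
    have "\<forall>i\<in>{0..<n}. 0 < f i \<and> f i \<le> n \<and> sp f {0..<n} i \<le> n"
    proof
      fix i assume i: "i \<in> {0..<n}"
      have sp: "sp f {0..<n} i = spaces P ! i" using spaces_sp[of i P] len i P(2) by simp
      have "f i = P ! i" using P(2) len i by (simp add: phi_def)
      moreover have "0 < P ! i" using pos i len by auto
      moreover have "f i \<le> sp f {0..<n} i" by (rule sp_ge)
      ultimately show "0 < f i \<and> f i \<le> n \<and> sp f {0..<n} i \<le> n" using sp le i by auto
    qed
    moreover have "\<forall>i. i \<notin> {0..<n} \<longrightarrow> f i = 0" using P(2) len by (simp add: phi_def)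
    ultimately show "f \<in> PFg {0..<n} 0 n" unfolding PFg_def by simp
  qed
  show "(\<lambda>f. map f [0..<n]) ` PFg {0..<n} 0 n \<subseteq> parking_functions n"
  proof
    fix P assume "P \<in> (\<lambda>f. map f [0..<n]) ` PFg {0..<n} 0 n"
    then obtain f where f: "f \<in> PFg {0..<n} 0 n" "P = map f [0..<n]" by auto
    have f0: "\<forall>i. i \<notin> {0..<n} \<longrightarrow> f i = 0" and fC: "\<forall>i\<in>{0..<n}. 0 < f i \<and> f i \<le> n \<and> sp f {0..<n} i \<le> n"
      using f(1) unfolding PFg_def by auto
    have ph: "phi P = f" using phi_map[OF f0] f(2) by simp
    have "\<forall>c<n. spaces P ! c \<le> n" using spaces_sp[of _ P] ph fC f(2) by auto
    thus "P \<in> parking_functions n" unfolding parking_functions_def using f(2) fC by auto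
  qed
qed

lemma pf_stats:
  assumes P: "P \<in> parking_functions n"
  shows "jump P = jumpg {0..<n} (phi P)" "lucky P = luckyg {0..<n} (phi P)"
        "critic n P = criticg n {0..<n} (phi P)"
proof -
  have len: "length P = n" using P unfolding parking_functions_def by auto
  have e: "\<And>c. c < n \<Longrightarrow> spaces P ! c = sp (phi P) {0..<n} c" using spaces_sp len by auto
  have e2: "\<And>c. c < n \<Longrightarrow> phi P c = P ! c" using len by (simp add: phi_def)
  show "jump P = jumpg {0..<n} (phi P)"
    unfolding jump_def jumpg_def len using e e2 by (auto simp: atLeast0LessThan intro!: sum.cong)
  show "lucky P = luckyg {0..<n} (phi P)"
    unfolding lucky_def luckyg_def len using e e2 by (auto intro!: arg_cong[where f=card])
  show "critic n P = criticg n {0..<n} (phi P)"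
    unfolding critic_def criticg_def len using e set_take_sp[of _ P] len
    by (auto intro!: arg_cong[where f=card])
qed

theorem parking_side:
  "(\<Sum>P \<in> parking_functions n. q ^ jump P * u ^ lucky P * c ^ critic n P) = X q u n c"
proof -
  have "(\<Sum>P \<in> parking_functions n. q ^ jump P * u ^ lucky P * c ^ critic n P)
      = (\<Sum>P \<in> parking_functions n. wP q u c n {0..<n} (phi P))"
    using pf_stats by (auto simp: wP_def intro!: sum.cong)
  also have "\<dots> = Q q u c {0..<n} 0 n"
    unfolding Q_def by (rule sum.reindex_bij_betw[OF pf_bij])
  also have "\<dots> = X q u n c" using Q_X[of "{0..<n}" n 0] by simp
  finally show ?thesis .
qed

definition RF :: "nat set \<Rightarrow> (nat \<Rightarrow> nat option) set" where
 "RF V = {par. (\<forall>v. v \<notin> V \<longrightarrow> par v = None) \<and> (\<forall>v w. par v = Some w \<longrightarrow> w \<in> V)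
            \<and> (\<forall>v. (v, v) \<notin> (parent_rel par)\<^sup>+)}"

definition invg :: "nat set \<Rightarrow> (nat \<Rightarrow> nat option) \<Rightarrow> nat" where
  "invg V par = card {(i, j). i \<in> V \<and> j \<in> V \<and> j < i \<and> descendant par i j}"
definition leadg :: "nat set \<Rightarrow> (nat \<Rightarrow> nat option) \<Rightarrow> nat" where
  "leadg V par = card {v \<in> V. \<forall>j. descendant par v j \<longrightarrow> v < j}"
definition treeg :: "nat set \<Rightarrow> (nat \<Rightarrow> nat option) \<Rightarrow> nat" where
  "treeg V par = card {v \<in> V. par v = None}"
definition wF :: "'a::comm_semiring_1 \<Rightarrow> 'a \<Rightarrow> 'a \<Rightarrow> nat set \<Rightarrow> (nat \<Rightarrow> nat option) \<Rightarrow> 'a" where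
  "wF q u c V F = q ^ invg V F * u ^ leadg V F * c ^ treeg V F"
definition G :: "'a::comm_semiring_1 \<Rightarrow> 'a \<Rightarrow> 'a \<Rightarrow> nat set \<Rightarrow> 'a" where
  "G q u c V = (\<Sum>F\<in>RF V. wF q u c V F)"

lemma pr_iff[simp]: "(v, w) \<in> parent_rel par \<longleftrightarrow> par v = Some w"
  unfolding parent_rel_def by simp

lemma pr_sv: "single_valued (parent_rel par)"
  unfolding single_valued_def by simp

lemma RF_finite: "finite V \<Longrightarrow> finite (RF V)"
proof -
  assume V: "finite V"
  have "RF V \<subseteq> {f. \<forall>x. (x \<in> V \<longrightarrow> f x \<in> insert None (Some ` V)) \<and> (x \<notin> V \<longrightarrow> f x = None)}"
  proof (rule subsetI, rule CollectI, rule allI)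
    fix f x assume "f \<in> RF V"
    then have A: "\<forall>v. v\<notin>V \<longrightarrow> f v = None" "\<forall>v w. f v = Some w \<longrightarrow> w\<in>V" by (auto simp: RF_def)
    show "(x\<in>V \<longrightarrow> f x \<in> insert None (Some ` V)) \<and> (x \<notin> V \<longrightarrow> f x = None)" using A by (cases "f x") auto
  qed
  thus ?thesis using finite_set_of_finite_funs[OF V, of "insert None (Some ` V)" None] V
    using finite_subset by blast
qed

lemma RF_trancl: assumes F: "F \<in> RF W" and xy: "(x, y) \<in> (parent_rel F)\<^sup>+" shows "x \<in> W \<and> y \<in> W"
  using xy
proof (induction rule: trancl_induct)
  case (base y)
  hence "F x = Some y" by simp
  thus ?case using F unfolding RF_def by (metis (mono_tags, lifting) mem_Collect_eq option.distinct(1))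
next
  case (step y z) thus ?case using F unfolding RF_def by auto
qed

lemma RF_desc: "F \<in> RF W \<Longrightarrow> descendant F i j \<Longrightarrow> i \<in> W \<and> j \<in> W"
  unfolding descendant_def using RF_trancl by blast

lemma RF_wf: "finite W \<Longrightarrow> F \<in> RF W \<Longrightarrow> wf ((parent_rel F)\<inverse>)"
proof (rule finite_acyclic_wf_converse)
  assume W: "finite W" and F: "F \<in> RF W"
  have "parent_rel F \<subseteq> W \<times> W"
  proof
    fix p assume "p \<in> parent_rel F"
    then obtain v w where p: "p = (v,w)" "F v = Some w" by (cases p) auto
    thus "p \<in> W \<times> W" using F unfolding RF_def by (metis (mono_tags, lifting) mem_Collect_eq option.distinct(1) SigmaI)
  qed
  thus "finite (parent_rel F)" using W finite_subset by blast
  show "acyclic (parent_rel F)" using F unfolding RF_def acyclic_def by auto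
qed

lemma RF_root: assumes W: "finite W" and F: "F \<in> RF W" shows "\<exists>r. (x, r) \<in> (parent_rel F)\<^sup>* \<and> F r = None"
proof (induction x rule: wf_induct_rule[OF RF_wf[OF W F]])
  case (1 x)
  show ?case
  proof (cases "F x")
    case None thus ?thesis by blast
  next
    case (Some w)
    then obtain r where "(w, r) \<in> (parent_rel F)\<^sup>*" "F r = None" using 1 by auto
    thus ?thesis using Some by (meson converse_rtrancl_into_rtrancl pr_iff)
  qed
qed

lemma RF_out: "F \<in> RF W \<Longrightarrow> v \<notin> W \<Longrightarrow> F v = None"
  unfolding RF_def by blast
lemma RF_tgt: "F \<in> RF W \<Longrightarrow> F v = Some w \<Longrightarrow> w \<in> W"
  unfolding RF_def by blast
lemma RF_acyc: "F \<in> RF W \<Longrightarrow> (v, v) \<notin> (parent_rel F)\<^sup>+"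
  unfolding RF_def by blast

locale fstep =
  fixes V :: "nat set"
  assumes finV: "finite V" and neV: "V \<noteq> {}"
begin

definition "m = Min V"
lemma m_in: "m \<in> V" unfolding m_def using finV neV by simp
lemma m_min: "v \<in> V \<Longrightarrow> m \<le> v" unfolding m_def using finV by simp

definition Dom where
  "Dom = (SIGMA S:{S. m \<in> S \<and> S \<subseteq> V}. SIGMA r:S. RF (S - {r}) \<times> RF (V - S))"

definition glue :: "nat set \<times> nat \<times> (nat \<Rightarrow> nat option) \<times> (nat \<Rightarrow> nat option) \<Rightarrow> nat \<Rightarrow> nat option" where
  "glue t = (case t of (S, r, F1, F2) \<Rightarrow> (\<lambda>v. if v \<in> S then (if v = r then None else
       (case F1 v of None \<Rightarrow> Some r | Some w \<Rightarrow> Some w)) else F2 v))"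

lemma glue_trancl:
  assumes t: "(S,r,F1,F2) \<in> Dom"
  defines "F \<equiv> glue (S,r,F1,F2)"
  shows "(x,y) \<in> (parent_rel F)\<^sup>+ \<longleftrightarrow>
     (x \<notin> S \<and> (x,y) \<in> (parent_rel F2)\<^sup>+) \<or> (x \<in> S - {r} \<and> ((x,y) \<in> (parent_rel F1)\<^sup>+ \<or> y = r))"
proof -
  have S: "m \<in> S" "S \<subseteq> V" "r \<in> S" and F1: "F1 \<in> RF (S - {r})" and F2: "F2 \<in> RF (V - S)"
    using t unfolding Dom_def by auto
  have finS: "finite (S - {r})" using S finV finite_subset by blast
  have Fr: "F r = None" unfolding F_def glue_def using S by simp
  have FS: "\<And>v. v \<in> S - {r} \<Longrightarrow> F v = (case F1 v of None \<Rightarrow> Some r | Some w \<Rightarrow> Some w)"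
    unfolding F_def glue_def by simp
  have FnS: "\<And>v. v \<notin> S \<Longrightarrow> F v = F2 v" unfolding F_def glue_def by simp
  have F1o: "\<And>v. v \<notin> S - {r} \<Longrightarrow> F1 v = None" using F1 by (rule RF_out)
  have F2o: "\<And>v. v \<notin> V - S \<Longrightarrow> F2 v = None" using F2 by (rule RF_out)
  have sub2: "parent_rel F2 \<subseteq> parent_rel F"
  proof
    fix p assume "p \<in> parent_rel F2"
    then obtain v w where p: "p = (v,w)" "F2 v = Some w" by (cases p) auto
    hence "v \<notin> S" using F2o by fastforce
    thus "p \<in> parent_rel F" using p FnS by simp
  qed
  have sub1: "parent_rel F1 \<subseteq> parent_rel F"
  proof
    fix p assume "p \<in> parent_rel F1"
    then obtain v w where p: "p = (v,w)" "F1 v = Some w" by (cases p) auto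
    hence "v \<in> S - {r}" using F1o by fastforce
    thus "p \<in> parent_rel F" using p FS by simp
  qed
  have tor: "\<And>x. x \<in> S - {r} \<Longrightarrow> (x, r) \<in> (parent_rel F)\<^sup>+"
  proof -
    fix x show "x \<in> S - {r} \<Longrightarrow> (x, r) \<in> (parent_rel F)\<^sup>+"
    proof (induction x rule: wf_induct_rule[OF RF_wf[OF finS F1]])
      case (1 x)
      show ?case
      proof (cases "F1 x")
        case None
        hence "F x = Some r" using FS[OF 1(2)] by simp
        thus ?thesis by auto
      next
        case (Some w)
        hence "w \<in> S - {r}" using F1 by (rule RF_tgt[rotated])
        hence "(w, r) \<in> (parent_rel F)\<^sup>+" using 1 Some by auto
        moreover have "F x = Some w" using FS[OF 1(2)] Some by simp
        ultimately show ?thesis by (meson pr_iff trancl_into_trancl2)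
      qed
    qed
  qed
  show ?thesis
  proof
    assume "(x,y) \<in> (parent_rel F)\<^sup>+"
    thus "(x \<notin> S \<and> (x,y) \<in> (parent_rel F2)\<^sup>+) \<or> (x \<in> S - {r} \<and> ((x,y) \<in> (parent_rel F1)\<^sup>+ \<or> y = r))"
    proof (induction rule: trancl_induct)
      case (base y)
      hence Fx: "F x = Some y" by simp
      show ?case
      proof (cases "x \<in> S")
        case True
        hence xr: "x \<in> S - {r}" using Fx Fr by auto
        show ?thesis using FS[OF xr] Fx xr by (cases "F1 x") auto
      next
        case False thus ?thesis using FnS Fx by auto
      qed
    next
      case (step y z)
      hence Fy: "F y = Some z" by simp
      from step.IH show ?case
      proof (elim disjE conjE)
        assume x: "x \<notin> S" and xy: "(x, y) \<in> (parent_rel F2)\<^sup>+"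
        have "y \<in> V - S" using RF_trancl[OF F2 xy] by simp
        hence "F2 y = Some z" using FnS Fy by simp
        thus ?thesis using x xy by (meson pr_iff trancl.trancl_into_trancl)
      next
        assume x: "x \<in> S - {r}" and xy: "(x, y) \<in> (parent_rel F1)\<^sup>+"
        have y: "y \<in> S - {r}" using RF_trancl[OF F1 xy] by simp
        show ?thesis
        proof (cases "F1 y")
          case None thus ?thesis using FS[OF y] Fy x by simp
        next
          case (Some w)
          hence "w = z" using FS[OF y] Fy by simp
          thus ?thesis using Some x xy by (meson pr_iff trancl.trancl_into_trancl)
        qed
      next
        assume "y = r" thus ?thesis using Fy Fr by simp
      qed
    qed
  next
    assume "(x \<notin> S \<and> (x,y) \<in> (parent_rel F2)\<^sup>+) \<or> (x \<in> S - {r} \<and> ((x,y) \<in> (parent_rel F1)\<^sup>+ \<or> y = r))"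
    thus "(x,y) \<in> (parent_rel F)\<^sup>+"
      using trancl_mono[OF _ sub1] trancl_mono[OF _ sub2] tor by blast
  qed
qed

end

lemma card_filter_sum': "finite A \<Longrightarrow> card {x\<in>A. P x} = (\<Sum>x\<in>A. if P x then 1 else 0)"
  by (simp add: sum.If_cases Int_def conj_commute)

lemma inv_sum: "finite W \<Longrightarrow> invg W F = (\<Sum>i\<in>W. card {j\<in>W. j < i \<and> descendant F i j})"
proof -
  assume W: "finite W"
  have "{(i, j). i \<in> W \<and> j \<in> W \<and> j < i \<and> descendant F i j} = Sigma W (\<lambda>i. {j\<in>W. j < i \<and> descendant F i j})"
    by auto
  thus ?thesis unfolding invg_def using W by (simp add: card_SigmaI)
qed

context fstep begin

lemma sum_split3:
  assumes "r \<in> S" "S \<subseteq> V"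
  shows "(\<Sum>v\<in>V. f v) = (\<Sum>v\<in>S-{r}. f v) + (\<Sum>v\<in>V-S. f v) + f r"
proof -
  have finS: "finite S" using assms(2) finV by (rule finite_subset)
  have fin: "finite (S - {r})" "finite (V - S)" using finS finV by auto
  have V: "V = insert r ((S - {r}) \<union> (V - S))" using assms by auto
  have nr: "r \<notin> (S - {r}) \<union> (V - S)" using assms by auto
  have "(\<Sum>v\<in>V. f v) = f r + (\<Sum>v\<in>(S - {r}) \<union> (V - S). f v)"
    by (subst V, rule sum.insert) (use fin nr in auto)
  also have "(\<Sum>v\<in>(S - {r}) \<union> (V - S). f v) = (\<Sum>v\<in>S-{r}. f v) + (\<Sum>v\<in>V-S. f v)"
    using fin by (intro sum.union_disjoint) auto
  finally show ?thesis by (simp add: add_ac)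
qed

lemma glue_facts:
  assumes t: "(S,r,F1,F2) \<in> Dom"
  defines "F \<equiv> glue (S,r,F1,F2)"
  shows "descendant F i j \<longleftrightarrow> (j \<notin> S \<and> descendant F2 i j) \<or> (j \<in> S - {r} \<and> (descendant F1 i j \<or> i = r))"
    and "F \<in> RF V"
proof -
  have S: "m \<in> S" "S \<subseteq> V" "r \<in> S" and F1: "F1 \<in> RF (S - {r})" and F2: "F2 \<in> RF (V - S)"
    using t unfolding Dom_def by auto
  note T = glue_trancl[OF t, folded F_def]
  show D: "descendant F i j \<longleftrightarrow> (j \<notin> S \<and> descendant F2 i j) \<or> (j \<in> S - {r} \<and> (descendant F1 i j \<or> i = r))"
    unfolding descendant_def T by auto
  have P1: "\<forall>v. v \<notin> V \<longrightarrow> F v = None"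
    unfolding F_def glue_def using S F2 RF_out by auto
  have P2: "\<forall>v w. F v = Some w \<longrightarrow> w \<in> V"
  proof (intro allI impI)
    fix v w assume Fv: "F v = Some w"
    show "w \<in> V"
    proof (cases "v \<in> S")
      case True
      hence v: "v \<noteq> r" using Fv unfolding F_def glue_def by auto
      show ?thesis
      proof (cases "F1 v")
        case None thus ?thesis using Fv True v S unfolding F_def glue_def by auto
      next
        case (Some w')
        hence "w' \<in> S - {r}" using RF_tgt[OF F1] by auto
        thus ?thesis using Fv True v S Some unfolding F_def glue_def by auto
      qed
    next
      case False
      hence "F2 v = Some w" using Fv unfolding F_def glue_def by auto
      thus ?thesis using RF_tgt[OF F2] by auto
    qed
  qed
  have P3: "\<forall>v. (v, v) \<notin> (parent_rel F)\<^sup>+"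
    unfolding T using RF_acyc[OF F1] RF_acyc[OF F2] by auto
  show "F \<in> RF V" unfolding RF_def using P1 P2 P3 by blast
qed

lemma glue_stats:
  assumes t: "(S,r,F1,F2) \<in> Dom"
  defines "F \<equiv> glue (S,r,F1,F2)"
  shows "invg V F = invg (S - {r}) F1 + invg (V - S) F2 + card {j\<in>S. j < r}"
    "leadg V F = leadg (S - {r}) F1 + leadg (V - S) F2 + (if r = m then 1 else 0)"
    "treeg V F = treeg (V - S) F2 + 1"
proof -
  have S: "m \<in> S" "S \<subseteq> V" "r \<in> S" and F1: "F1 \<in> RF (S - {r})" and F2: "F2 \<in> RF (V - S)"
    using t unfolding Dom_def by auto
  have finS: "finite S" using S(2) finV by (rule finite_subset)
  have fin: "finite (S - {r})" "finite (V - S)" "finite S" using finS finV by auto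
  note D = glue_facts(1)[OF t, folded F_def]
  have D2: "descendant F v j \<longleftrightarrow> descendant F2 v j" if v: "v \<in> V - S" for v j
  proof
    assume "descendant F v j"
    hence "(j \<notin> S \<and> descendant F2 v j) \<or> (j \<in> S - {r} \<and> (descendant F1 v j \<or> v = r))" using D by simp
    moreover have "\<not> descendant F1 v j" using RF_desc[OF F1, of v j] v by auto
    ultimately show "descendant F2 v j" using v S by auto
  next
    assume d: "descendant F2 v j"
    hence "j \<notin> S" using RF_desc[OF F2 d] by auto
    thus "descendant F v j" using D d by simp
  qed
  have D1: "descendant F v j \<longleftrightarrow> descendant F1 v j" if v: "v \<in> S - {r}" for v j
  proof
    assume "descendant F v j"
    hence "(j \<notin> S \<and> descendant F2 v j) \<or> (j \<in> S - {r} \<and> (descendant F1 v j \<or> v = r))" using D by simp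
    moreover have "\<not> descendant F2 v j" using RF_desc[OF F2, of v j] v by auto
    ultimately show "descendant F1 v j" using v by auto
  next
    assume d: "descendant F1 v j"
    hence "j \<in> S - {r}" using RF_desc[OF F1 d] by auto
    thus "descendant F v j" using D d by simp
  qed
  have D0: "descendant F r j \<longleftrightarrow> j \<in> S - {r}" for j
  proof -
    have "\<not> descendant F2 r j" using RF_desc[OF F2, of r j] S by auto
    moreover have "\<not> descendant F1 r j" using RF_desc[OF F1, of r j] by auto
    ultimately show ?thesis using D[of r j] by auto
  qed
  show "invg V F = invg (S - {r}) F1 + invg (V - S) F2 + card {j\<in>S. j < r}"
  proof -
    have a: "\<And>i. i \<in> S - {r} \<Longrightarrow> {j\<in>V. j < i \<and> descendant F i j} = {j\<in>S - {r}. j < i \<and> descendant F1 i j}"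
      using D1 RF_desc[OF F1] S by blast
    have b: "\<And>i. i \<in> V - S \<Longrightarrow> {j\<in>V. j < i \<and> descendant F i j} = {j\<in>V - S. j < i \<and> descendant F2 i j}"
      using D2 RF_desc[OF F2] S by blast
    have c: "{j\<in>V. j < r \<and> descendant F r j} = {j\<in>S. j < r}"
      using D0 S by auto
    show ?thesis unfolding inv_sum[OF finV] inv_sum[OF fin(1)] inv_sum[OF fin(2)] sum_split3[OF S(3,2)]
      using a b c by simp
  qed
  show "leadg V F = leadg (S - {r}) F1 + leadg (V - S) F2 + (if r = m then 1 else 0)"
  proof -
    have rm: "(\<forall>j. descendant F r j \<longrightarrow> r < j) \<longleftrightarrow> r = m"
    proof
      assume h: "\<forall>j. descendant F r j \<longrightarrow> r < j"
      show "r = m"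
      proof (rule ccontr)
        assume "r \<noteq> m"
        hence "descendant F r m" using D0 S by auto
        hence "r < m" using h by auto
        thus False using m_min S by force
      qed
    next
      assume "r = m"
      thus "\<forall>j. descendant F r j \<longrightarrow> r < j" using D0 m_min S
        by (metis Diff_iff le_neq_implies_less singletonI subsetD)
    qed
    show ?thesis unfolding leadg_def card_filter_sum'[OF finV] card_filter_sum'[OF fin(1)]
        card_filter_sum'[OF fin(2)] sum_split3[OF S(3,2)]
      using D1 D2 rm by simp
  qed
  show "treeg V F = treeg (V - S) F2 + 1"
  proof -
    have a: "\<And>v. v \<in> S - {r} \<Longrightarrow> F v \<noteq> None" unfolding F_def glue_def
      by (auto split: option.split)
    have b: "\<And>v. v \<in> V - S \<Longrightarrow> F v = F2 v" unfolding F_def glue_def by auto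
    have c: "F r = None" unfolding F_def glue_def using S by auto
    have a': "(\<Sum>v\<in>S - {r}. if F v = None then 1 else 0) = (0::nat)"
      using a by (intro sum.neutral) auto
    have b': "(\<Sum>v\<in>V - S. if F v = None then 1 else 0) = (\<Sum>v\<in>V - S. if F2 v = None then 1 else (0::nat))"
      using b by (intro sum.cong) auto
    show ?thesis unfolding treeg_def card_filter_sum'[OF finV] card_filter_sum'[OF fin(2)] sum_split3[OF S(3,2)]
      a' b' using c by simp
  qed
qed

lemma weight:
  assumes t: "(S,r,F1,F2) \<in> Dom"
  shows "wF q u c V (glue (S,r,F1,F2)) =
     wF q u 1 (S - {r}) F1 * wF q u c (V - S) F2 * (c * q ^ card {j\<in>S. j < r} * u ^ (if r = m then 1 else 0))"
  unfolding wF_def glue_stats[OF t] by (simp add: power_add mult_ac)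

end

context fstep begin

definition root :: "(nat \<Rightarrow> nat option) \<Rightarrow> nat" where
  "root F = (THE r. (m, r) \<in> (parent_rel F)\<^sup>* \<and> F r = None)"

lemma root_unique:
  assumes "(x, r1) \<in> (parent_rel F)\<^sup>*" "F r1 = None" "(x, r2) \<in> (parent_rel F)\<^sup>*" "F r2 = None"
  shows "r1 = r2"
proof -
  have "(r1, r2) \<in> (parent_rel F)\<^sup>* \<or> (r2, r1) \<in> (parent_rel F)\<^sup>*"
    using single_valued_confluent[OF pr_sv assms(1,3)] .
  thus ?thesis using assms(2,4) by (auto elim: converse_rtranclE)
qed

lemma root_props: "F \<in> RF V \<Longrightarrow> (m, root F) \<in> (parent_rel F)\<^sup>* \<and> F (root F) = None"
  unfolding root_def
  by (rule theI', use RF_root[OF finV, of F m] root_unique in blast)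

lemma root_eq: "(m, r) \<in> (parent_rel F)\<^sup>* \<Longrightarrow> F r = None \<Longrightarrow> root F = r"
  unfolding root_def by (rule the_equality) (auto intro: root_unique)

definition dec :: "(nat \<Rightarrow> nat option) \<Rightarrow> nat set \<times> nat \<times> (nat \<Rightarrow> nat option) \<times> (nat \<Rightarrow> nat option)" where
  "dec F = (let r = root F; S = {v. (v, r) \<in> (parent_rel F)\<^sup>*} in
     (S, r, \<lambda>v. if v \<in> S \<and> v \<noteq> r \<and> F v \<noteq> Some r then F v else None, \<lambda>v. if v \<in> S then None else F v))"

lemma dec_facts:
  assumes F: "F \<in> RF V"
  shows "dec F \<in> Dom" "glue (dec F) = F"
proof -
  define R where "R = parent_rel F"
  define r where "r = root F"
  define S where "S = {v. (v, r) \<in> R\<^sup>*}"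
  define F1 where "F1 = (\<lambda>v. if v \<in> S \<and> v \<noteq> r \<and> F v \<noteq> Some r then F v else None)"
  define F2 where "F2 = (\<lambda>v. if v \<in> S then None else F v)"
  have d: "dec F = (S, r, F1, F2)" unfolding dec_def Let_def r_def S_def F1_def F2_def R_def by simp
  have mr: "(m, r) \<in> R\<^sup>*" and Fr: "F r = None" using root_props[OF F] unfolding r_def R_def by auto
  have rV: "r \<in> V"
  proof (cases "m = r")
    case True thus ?thesis using m_in by simp
  next
    case False thus ?thesis using mr RF_trancl[OF F] unfolding R_def by (meson rtranclD)
  qed
  have SV: "S \<subseteq> V"
  proof
    fix v assume "v \<in> S"
    hence "(v, r) \<in> R\<^sup>*" unfolding S_def by simp
    thus "v \<in> V" using rV RF_trancl[OF F, of v r] unfolding R_def rtrancl_eq_or_trancl by auto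
  qed
  have mS: "m \<in> S" "r \<in> S" unfolding S_def using mr by auto
  have step: "\<And>v w. v \<in> S \<Longrightarrow> v \<noteq> r \<Longrightarrow> F v = Some w \<Longrightarrow> w \<in> S"
  proof -
    fix v w assume v: "v \<in> S" "v \<noteq> r" "F v = Some w"
    hence "(v, r) \<in> R\<^sup>+" unfolding S_def by (simp add: rtrancl_eq_or_trancl)
    then obtain y where "(v, y) \<in> R" "(y, r) \<in> R\<^sup>*" by (meson tranclD)
    thus "w \<in> S" using v unfolding S_def R_def by simp
  qed
  have nn: "\<And>v. v \<in> S \<Longrightarrow> v \<noteq> r \<Longrightarrow> F v \<noteq> None"
  proof -
    fix v assume v: "v \<in> S" "v \<noteq> r"
    hence "(v, r) \<in> R\<^sup>+" unfolding S_def by (simp add: rtrancl_eq_or_trancl)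
    then obtain y where "(v, y) \<in> R" by (meson tranclD)
    thus "F v \<noteq> None" unfolding R_def by simp
  qed
  have out: "\<And>v w. v \<notin> S \<Longrightarrow> F v = Some w \<Longrightarrow> w \<notin> S"
  proof
    fix v w assume v: "v \<notin> S" "F v = Some w" and "w \<in> S"
    hence "(v, r) \<in> R\<^sup>*" unfolding S_def R_def by (meson converse_rtrancl_into_rtrancl mem_Collect_eq pr_iff)
    thus False using v unfolding S_def by simp
  qed
  have F1: "F1 \<in> RF (S - {r})"
  proof -
    have A: "\<forall>v. v \<notin> S - {r} \<longrightarrow> F1 v = None" unfolding F1_def by auto
    have B: "\<forall>v w. F1 v = Some w \<longrightarrow> w \<in> S - {r}"
    proof (intro allI impI)
      fix v w assume "F1 v = Some w"
      hence "v \<in> S" "v \<noteq> r" "F v = Some w" "w \<noteq> r" unfolding F1_def by (auto split: if_splits)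
      thus "w \<in> S - {r}" using step by auto
    qed
    have "parent_rel F1 \<subseteq> parent_rel F" unfolding F1_def by (auto split: if_splits)
    hence C: "\<forall>v. (v, v) \<notin> (parent_rel F1)\<^sup>+" using RF_acyc[OF F] trancl_mono by blast
    show ?thesis unfolding RF_def using A B C by blast
  qed
  have F2: "F2 \<in> RF (V - S)"
  proof -
    have A: "\<forall>v. v \<notin> V - S \<longrightarrow> F2 v = None" unfolding F2_def using RF_out[OF F] by auto
    have B: "\<forall>v w. F2 v = Some w \<longrightarrow> w \<in> V - S"
    proof (intro allI impI)
      fix v w assume "F2 v = Some w"
      hence "v \<notin> S" "F v = Some w" unfolding F2_def by (auto split: if_splits)
      thus "w \<in> V - S" using out RF_tgt[OF F] by auto
    qed
    have "parent_rel F2 \<subseteq> parent_rel F" unfolding F2_def by (auto split: if_splits)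
    hence C: "\<forall>v. (v, v) \<notin> (parent_rel F2)\<^sup>+" using RF_acyc[OF F] trancl_mono by blast
    show ?thesis unfolding RF_def using A B C by blast
  qed
  show "dec F \<in> Dom" unfolding d Dom_def using mS SV F1 F2 by auto
  show "glue (dec F) = F"
  proof
    fix v show "glue (dec F) v = F v"
    proof (cases "v \<in> S")
      case True
      show ?thesis
      proof (cases "v = r")
        case True thus ?thesis using mS Fr unfolding d glue_def by simp
      next
        case False
        then obtain w where w: "F v = Some w" using nn \<open>v \<in> S\<close> by auto
        thus ?thesis using \<open>v \<in> S\<close> False unfolding d glue_def F1_def by (cases "w = r") auto
      qed
    next
      case False thus ?thesis unfolding d glue_def F2_def by simp
    qed
  qed
qed

lemma dec_glue:
  assumes t: "t \<in> Dom"
  shows "dec (glue t) = t"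
proof -
  obtain S r F1 F2 where tt: "t = (S, r, F1, F2)" by (cases t) auto
  have t': "(S, r, F1, F2) \<in> Dom" using t tt by simp
  have S: "m \<in> S" "S \<subseteq> V" "r \<in> S" and F1: "F1 \<in> RF (S - {r})" and F2: "F2 \<in> RF (V - S)"
    using t' unfolding Dom_def by auto
  define F where "F = glue (S, r, F1, F2)"
  note T = glue_trancl[OF t', folded F_def]
  have Fr: "F r = None" unfolding F_def glue_def using S by simp
  have mr: "(m, r) \<in> (parent_rel F)\<^sup>*"
  proof (cases "m = r")
    case False thus ?thesis using T[of m r] S by auto
  qed simp
  have rt: "root F = r" by (rule root_eq[OF mr Fr])
  have Seq: "{v. (v, r) \<in> (parent_rel F)\<^sup>*} = S"
  proof (intro set_eqI iffI)
    fix v assume "v \<in> {v. (v, r) \<in> (parent_rel F)\<^sup>*}"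
    hence "v = r \<or> (v, r) \<in> (parent_rel F)\<^sup>+" by (auto simp: rtrancl_eq_or_trancl)
    thus "v \<in> S"
    proof
      assume "(v, r) \<in> (parent_rel F)\<^sup>+"
      hence "(v \<notin> S \<and> (v, r) \<in> (parent_rel F2)\<^sup>+) \<or> v \<in> S - {r}" using T by auto
      thus "v \<in> S" using RF_trancl[OF F2, of v r] S by auto
    qed (use S in simp)
  next
    fix v assume "v \<in> S"
    thus "v \<in> {v. (v, r) \<in> (parent_rel F)\<^sup>*}" using T[of v r] by (cases "v = r") auto
  qed
  have e1: "(\<lambda>v. if v \<in> S \<and> v \<noteq> r \<and> F v \<noteq> Some r then F v else None) = F1"
  proof
    fix v show "(if v \<in> S \<and> v \<noteq> r \<and> F v \<noteq> Some r then F v else None) = F1 v"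
    proof (cases "v \<in> S - {r}")
      case True
      show ?thesis
      proof (cases "F1 v")
        case None thus ?thesis using True unfolding F_def glue_def by simp
      next
        case (Some w)
        hence "w \<in> S - {r}" using RF_tgt[OF F1] by auto
        thus ?thesis using True Some unfolding F_def glue_def by auto
      qed
    next
      case False thus ?thesis using RF_out[OF F1] by auto
    qed
  qed
  have e2: "(\<lambda>v. if v \<in> S then None else F v) = F2"
  proof
    fix v show "(if v \<in> S then None else F v) = F2 v"
      using RF_out[OF F2, of v] unfolding F_def glue_def by auto
  qed
  show ?thesis unfolding tt F_def[symmetric] dec_def Let_def rt Seq e1 e2 by simp
qed

lemma bij: "bij_betw glue Dom (RF V)"
  by (rule bij_betw_byWitness[where f'=dec])
     (auto simp: dec_glue dec_facts intro: glue_facts(2))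

end

lemma rank_sum:
  assumes S: "finite (S::nat set)"
  shows "(\<Sum>r\<in>S. g (card {j\<in>S. j < r})) = (\<Sum>k<card S. g k)"
proof -
  define rk where "rk r = card {j\<in>S. j < r}" for r
  have inj: "inj_on rk S"
  proof (rule inj_onI)
    fix x y assume xy: "x \<in> S" "y \<in> S" "rk x = rk y"
    show "x = y"
    proof (rule ccontr)
      assume "x \<noteq> y"
      hence "x < y \<or> y < x" by auto
      thus False
      proof
        assume "x < y"
        hence "{j\<in>S. j < x} \<subset> {j\<in>S. j < y}" using xy by auto
        hence "rk x < rk y" unfolding rk_def using S by (intro psubset_card_mono) auto
        thus False using xy by simp
      next
        assume "y < x"
        hence "{j\<in>S. j < y} \<subset> {j\<in>S. j < x}" using xy by auto
        hence "rk y < rk x" unfolding rk_def using S by (intro psubset_card_mono) auto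
        thus False using xy by simp
      qed
    qed
  qed
  have sub: "rk ` S \<subseteq> {..<card S}"
  proof
    fix k assume "k \<in> rk ` S"
    then obtain r where r: "r \<in> S" "k = rk r" by auto
    have "{j\<in>S. j < r} \<subset> S" using r by auto
    hence "rk r < card S" unfolding rk_def using S by (intro psubset_card_mono) auto
    thus "k \<in> {..<card S}" using r by simp
  qed
  have img: "rk ` S = {..<card S}"
    by (rule card_subset_eq) (use sub card_image[OF inj] in auto)
  have "(\<Sum>k<card S. g k) = (\<Sum>r\<in>S. g (rk r))"
    unfolding img[symmetric] by (rule sum.reindex[OF inj, unfolded comp_def])
  thus ?thesis unfolding rk_def by simp
qed

lemma pow_sum:
  assumes W: "finite W"
  shows "(\<Sum>T\<in>Pow W. h (card T)) = (\<Sum>k\<le>card W. of_nat (card W choose k) * (h k :: 'a::comm_semiring_1))"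
proof -
  have "(\<Sum>T\<in>Pow W. h (card T)) = (\<Sum>k\<le>card W. \<Sum>T\<in>{T. T \<in> Pow W \<and> card T = k}. h (card T))"
    by (rule sum.group[symmetric]) (use W card_mono in auto)
  also have "\<dots> = (\<Sum>k\<le>card W. of_nat (card W choose k) * h k)"
  proof (rule sum.cong[OF refl])
    fix k
    have "(\<Sum>T\<in>{T. T \<in> Pow W \<and> card T = k}. h (card T)) = (\<Sum>T\<in>{T. T \<subseteq> W \<and> card T = k}. h k)"
      by (rule sum.cong) auto
    also have "\<dots> = of_nat (card W choose k) * h k" using n_subsets[OF W, of k] by simp
    finally show "(\<Sum>T\<in>{T. T \<in> Pow W \<and> card T = k}. h (card T)) = of_nat (card W choose k) * h k" .
  qed
  finally show ?thesis .
qed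

context fstep begin

lemma G_rec:
  "G q u c V = (\<Sum>S\<in>{S. m \<in> S \<and> S \<subseteq> V}. \<Sum>r\<in>S.
      G q u 1 (S - {r}) * G q u c (V - S) * (c * q ^ card {j\<in>S. j < r} * u ^ (if r = m then 1 else 0)))"
proof -
  define Ss where "Ss = {S. m \<in> S \<and> S \<subseteq> V}"
  define T where "T S r = RF (S - {r}) \<times> RF (V - S)" for S r
  define H where "H t = wF q u c V (glue t)" for t
  have finSs: "finite Ss" by (rule finite_subset[of _ "Pow V"]) (auto simp: Ss_def finV)
  have finS: "S \<in> Ss \<Longrightarrow> finite S" for S unfolding Ss_def using finV finite_subset by blast
  have finT: "S \<in> Ss \<Longrightarrow> finite (T S r)" for S r
  proof -
    assume "S \<in> Ss"
    hence "finite S" using finS by blast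
    thus "finite (T S r)" unfolding T_def using finV by (simp add: RF_finite)
  qed
  have "G q u c V = (\<Sum>t\<in>Dom. H t)"
    unfolding G_def H_def using sum.reindex_bij_betw[OF bij, of "wF q u c V"] by simp
  also have "\<dots> = (\<Sum>S\<in>Ss. \<Sum>p\<in>(SIGMA r:S. T S r). H (S,p))"
    unfolding Dom_def Ss_def[symmetric] T_def[symmetric]
    by (subst sum.Sigma) (auto simp: finSs finS finT)
  also have "\<dots> = (\<Sum>S\<in>Ss. \<Sum>r\<in>S. \<Sum>p\<in>T S r. H (S,r,p))"
    by (rule sum.cong[OF refl], subst sum.Sigma) (auto simp: finS finT)
  also have "\<dots> = (\<Sum>S\<in>Ss. \<Sum>r\<in>S. G q u 1 (S - {r}) * G q u c (V - S) *
      (c * q ^ card {j\<in>S. j < r} * u ^ (if r = m then 1 else 0)))"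
  proof (intro sum.cong refl)
    fix S r assume Sr: "S \<in> Ss" "r \<in> S"
    have "(\<Sum>p\<in>T S r. H (S,r,p)) = (\<Sum>F1\<in>RF (S - {r}). \<Sum>F2\<in>RF (V - S). H (S,r,F1,F2))"
      unfolding T_def sum.cartesian_product' by (rule refl)
    also have "\<dots> = (\<Sum>F1\<in>RF (S - {r}). \<Sum>F2\<in>RF (V - S).
        wF q u 1 (S - {r}) F1 * wF q u c (V - S) F2 * (c * q ^ card {j\<in>S. j < r} * u ^ (if r = m then 1 else 0)))"
    proof (intro sum.cong refl)
      fix F1 F2 assume "F1 \<in> RF (S - {r})" "F2 \<in> RF (V - S)"
      hence "(S,r,F1,F2) \<in> Dom" unfolding Dom_def using Sr Ss_def by auto
      thus "H (S,r,F1,F2) = wF q u 1 (S - {r}) F1 * wF q u c (V - S) F2 * (c * q ^ card {j\<in>S. j < r} * u ^ (if r = m then 1 else 0))"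
        unfolding H_def by (rule weight)
    qed
    also have "\<dots> = G q u 1 (S - {r}) * G q u c (V - S) * (c * q ^ card {j\<in>S. j < r} * u ^ (if r = m then 1 else 0))"
      unfolding G_def by (simp add: sum_distrib_left sum_distrib_right mult_ac)
    finally show "(\<Sum>p\<in>T S r. H (S,r,p)) = G q u 1 (S - {r}) * G q u c (V - S) * (c * q ^ card {j\<in>S. j < r} * u ^ (if r = m then 1 else 0))" .
  qed
  finally show ?thesis unfolding Ss_def .
qed

end

lemma RF_empty: "RF {} = {\<lambda>_. None}"
proof -
  have "parent_rel (\<lambda>_. None) = {}" unfolding parent_rel_def by simp
  thus ?thesis unfolding RF_def by auto
qed

lemma G_X: "finite V \<Longrightarrow> G q u c V = X q u (card V) c"
proof (induction "card V" arbitrary: V c rule: less_induct)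
  case less
  show ?case
  proof (cases "card V")
    case 0
    hence "V = {}" using less by simp
    thus ?thesis using 0 by (simp add: G_def RF_empty wF_def invg_def leadg_def treeg_def X.simps(1))
  next
    case (Suc n)
    hence ne: "V \<noteq> {}" by auto
    interpret fstep V using less ne by unfold_locales auto
    define K where "K s = (\<Sum>k<s. q^k * u^(if k=0 then 1 else 0))" for s
    define h where "h s = c * X q u (s - 1) 1 * X q u (Suc n - s) c * K s" for s
    have step: "(\<Sum>r\<in>S. G q u 1 (S - {r}) * G q u c (V - S) * (c * q ^ card {j\<in>S. j < r} * u ^ (if r = m then 1 else 0)))
        = h (card S)" if S: "m \<in> S" "S \<subseteq> V" for S
    proof -
      have finS: "finite S" using S(2) less(2) by (rule finite_subset)
      have cS: "card S \<le> card V" using card_mono[OF less(2) S(2)] .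
      have "card S \<noteq> 0" using finS S(1) by auto
      hence cS1: "card S \<ge> 1" by linarith
      have IH1: "G q u 1 (S - {r}) = X q u (card S - 1) 1" if "r \<in> S" for r
      proof -
        have cd: "card (S - {r}) = card S - 1" using finS that by simp
        hence lt: "card (S - {r}) < card V" using cS cS1 by linarith
        have fin: "finite (S - {r})" using finS by simp
        show ?thesis using less(1)[OF lt fin] cd by simp
      qed
      have cVS: "card (V - S) = Suc n - card S" using card_Diff_subset[OF finS S(2)] Suc by simp
      have IH2: "G q u c (V - S) = X q u (Suc n - card S) c"
      proof -
        have lt: "card (V - S) < card V" using cVS cS1 Suc by linarith
        have fin: "finite (V - S)" using less(2) by simp
        show ?thesis using less(1)[OF lt fin] cVS by simp
      qed
      have rk: "\<And>r. r \<in> S \<Longrightarrow> (r = m) = (card {j\<in>S. j < r} = 0)"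
      proof -
        fix r assume r: "r \<in> S"
        have "card {j\<in>S. j < r} = 0 \<longleftrightarrow> {j\<in>S. j < r} = {}" using finS by simp
        also have "\<dots> \<longleftrightarrow> r = m"
        proof
          assume e: "{j\<in>S. j < r} = {}"
          hence "\<not> m < r" using S(1) by auto
          moreover have "m \<le> r" using m_min S(2) r by auto
          ultimately show "r = m" by simp
        next
          assume "r = m"
          thus "{j\<in>S. j < r} = {}" using m_min S(2) by (auto simp: subset_iff not_less[symmetric])
        qed
        finally show "(r = m) = (card {j\<in>S. j < r} = 0)" by simp
      qed
      have "(\<Sum>r\<in>S. G q u 1 (S - {r}) * G q u c (V - S) * (c * q ^ card {j\<in>S. j < r} * u ^ (if r = m then 1 else 0)))
          = (\<Sum>r\<in>S. c * X q u (card S - 1) 1 * X q u (Suc n - card S) c *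
               (q ^ card {j\<in>S. j < r} * u ^ (if card {j\<in>S. j < r} = 0 then 1 else 0)))"
        using IH1 IH2 rk by (intro sum.cong refl) (simp add: mult_ac)
      also have "\<dots> = c * X q u (card S - 1) 1 * X q u (Suc n - card S) c *
               (\<Sum>r\<in>S. q ^ card {j\<in>S. j < r} * u ^ (if card {j\<in>S. j < r} = 0 then 1 else 0))"
        by (simp add: sum_distrib_left)
      also have "(\<Sum>r\<in>S. q ^ card {j\<in>S. j < r} * u ^ (if card {j\<in>S. j < r} = 0 then 1 else 0)) = K (card S)"
        unfolding K_def by (rule rank_sum[OF finS])
      finally show ?thesis unfolding h_def .
    qed
    have "G q u c V = (\<Sum>S\<in>{S. m \<in> S \<and> S \<subseteq> V}. h (card S))"
      unfolding G_rec using step by (intro sum.cong refl) auto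
    also have "{S. m \<in> S \<and> S \<subseteq> V} = insert m ` Pow (V - {m})"
    proof (intro set_eqI iffI)
      fix S assume "S \<in> {S. m \<in> S \<and> S \<subseteq> V}"
      hence "S = insert m (S - {m})" "S - {m} \<in> Pow (V - {m})" by auto
      thus "S \<in> insert m ` Pow (V - {m})" by blast
    qed (use m_in in auto)
    also have "(\<Sum>S\<in>insert m ` Pow (V - {m}). h (card S)) = (\<Sum>T\<in>Pow (V - {m}). h (card (insert m T)))"
    proof (rule sum.reindex[unfolded comp_def])
      show "inj_on (insert m) (Pow (V - {m}))" unfolding inj_on_def by blast
    qed
    also have "\<dots> = (\<Sum>T\<in>Pow (V - {m}). h (Suc (card T)))"
    proof (rule sum.cong[OF refl])
      fix T assume "T \<in> Pow (V - {m})"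
      hence "finite T" "m \<notin> T" using less(2) finite_subset by auto
      thus "h (card (insert m T)) = h (Suc (card T))" by simp
    qed
    also have "\<dots> = (\<Sum>k\<le>n. of_nat (n choose k) * h (Suc k))"
    proof -
      have "card (V - {m}) = n" using Suc m_in less(2) by simp
      thus ?thesis using pow_sum[of "V - {m}" "\<lambda>k. h (Suc k)"] less(2) by simp
    qed
    also have "\<dots> = X q u (card V) c"
      unfolding Suc X.simps(2) h_def K_def lessThan_Suc_atMost
      by (simp add: sum_distrib_left mult_ac)
    finally show ?thesis .
  qed
qed

theorem forest_side:
  fixes q u c :: "'a::comm_semiring_1"
  shows "(\<Sum>F \<in> rooted_forests n. q ^ inv_forest n F * u ^ lead_forest n F * c ^ tree_forest n F) = X q u n c"
proof -
  have "rooted_forests n = RF {1..n}" unfolding rooted_forests_def RF_def by simp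
  moreover have "\<And>F. inv_forest n F = invg {1..n} F" "\<And>F. lead_forest n F = leadg {1..n} F"
    "\<And>F. tree_forest n F = treeg {1..n} F"
    unfolding inv_forest_def invg_def lead_forest_def leadg_def tree_forest_def treeg_def by auto
  ultimately have "(\<Sum>F \<in> rooted_forests n. q ^ inv_forest n F * u ^ lead_forest n F * c ^ tree_forest n F)
     = G q u c {1..n}" unfolding G_def wF_def by simp
  also have "\<dots> = X q u n c" using G_X[of "{1..n}"] by simp
  finally show ?thesis .
qed

theorem corollary5p4:
  fixes q u c :: "'a :: comm_semiring_1" and n :: nat
  assumes "n \<ge> 1"
  shows "(\<Sum>F \<in> rooted_forests n. q ^ inv_forest n F * u ^ lead_forest n F * c ^ tree_forest n F)
       = (\<Sum>P \<in> parking_functions n. q ^ jump P * u ^ lucky P * c ^ critic n P)"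
  by (simp only: forest_side parking_side)

end
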